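(* Let $n\ge1$, let $B=\{\cos(\theta)|0\rangle+\sin(\theta)|1\rangle\mid0\le\theta<2\pi\}$ and $\mathcal S=B^{\otimes n}=\{|b_1\rangle\otimes\cdots\otimes|b_n\rangle\mid|b_j\rangle\in B\}$. (i) There exists a randomization procedure for $\mathcal S$ whose probability distribution has Shannon entropy $H(p_1,\dots,p_N)=n$. (ii) Every randomization procedure for $\mathcal S$ (using any number of ancilla qubits) has $H(p_1,\dots,p_N)\ge n$.
   Context: $\mathcal{H}_{2^k}$ denotes the Hilbert space of $k$ qubits; $H(p_1,\dots,p_N)=-\sum_ip_i\log_2p_i$. A randomization procedure for a set $\mathcal S\subseteq\mathcal H_{2^n}$ of pure $n$-qubit states consists of an integer $m\ge n$, probabilities $p_1,\dots,p_N\ge0$ with $\sum_ip_i=1$, unitaries $U_1,\dots,U_N$ on $\mathcal H_{2^m}$, an $(m-n)$-qubit density matrix $\rho_a$ (ancilla) and an $m$-qubit density matrix $\rho_0$ such that $\sum_{i=1}^Np_iU_i(|\phi\rangle\langle\phi|\otimes\rho_a)U_i^\dagger=\rho_0$ for every $|\phi\rangle\in\mathcal S$ (the entropy generated is $H(p_1,\dots,p_N)$). *)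

theory Defs
  imports "HOL-Analysis.Analysis" "Jordan_Normal_Form.Matrix" "Jordan_Normal_Form.Schur_Decomposition"
begin

text \<open>A k-qubit (column) vector lives in carrier_vec (2^k); operators in carrier_mat (2^k) (2^k).
  Basis index i of a tensor product u (x) v is (i div dim v, i mod dim v), i.e. first factor most significant.\<close>

definition kron_vec :: "complex vec \<Rightarrow> complex vec \<Rightarrow> complex vec" where
  "kron_vec u v = vec (dim_vec u * dim_vec v) (\<lambda>i. u $ (i div dim_vec v) * v $ (i mod dim_vec v))"

definition kron_mat :: "complex mat \<Rightarrow> complex mat \<Rightarrow> complex mat" where
  "kron_mat A B = mat (dim_row A * dim_row B) (dim_col A * dim_col B)
     (\<lambda>(i,j). A $$ (i div dim_row B, j div dim_col B) * B $$ (i mod dim_row B, j mod dim_col B))"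

fun tensor_list :: "complex vec list \<Rightarrow> complex vec" where
  "tensor_list [] = vec 1 (\<lambda>_. 1)"
| "tensor_list (v # vs) = kron_vec v (tensor_list vs)"

definition proj :: "complex vec \<Rightarrow> complex mat" where
  "proj v = mat (dim_vec v) (dim_vec v) (\<lambda>(i,j). v $ i * cnj (v $ j))"

definition mat_trace :: "complex mat \<Rightarrow> complex" where
  "mat_trace A = (\<Sum>i<dim_row A. A $$ (i,i))"

definition unitary_op :: "nat \<Rightarrow> complex mat \<Rightarrow> bool" where
  "unitary_op k U \<longleftrightarrow> U \<in> carrier_mat (2^k) (2^k) \<and> mat_adjoint U * U = 1\<^sub>m (2^k)"

definition density_mat :: "nat \<Rightarrow> complex mat \<Rightarrow> bool" where
  "density_mat k \<rho> \<longleftrightarrow> \<rho> \<in> carrier_mat (2^k) (2^k) \<and> mat_adjoint \<rho> = \<rho>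
     \<and> (\<forall>v \<in> carrier_vec (2^k). conjugate v \<bullet> (\<rho> *\<^sub>v v) \<in> \<real> \<and> Re (conjugate v \<bullet> (\<rho> *\<^sub>v v)) \<ge> 0)
     \<and> mat_trace \<rho> = 1"

definition shannon :: "nat \<Rightarrow> (nat \<Rightarrow> real) \<Rightarrow> real" where
  "shannon N p = - (\<Sum>i<N. if p i = 0 then 0 else p i * log 2 (p i))"

definition mixture :: "nat \<Rightarrow> nat \<Rightarrow> (nat \<Rightarrow> real) \<Rightarrow> (nat \<Rightarrow> complex mat) \<Rightarrow> complex mat \<Rightarrow> complex mat" where
  "mixture d N p U X = mat d d (\<lambda>rc. \<Sum>i<N. complex_of_real (p i) * (U i * X * mat_adjoint (U i)) $$ rc)"

definition randomization_procedure ::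
  "nat \<Rightarrow> complex vec set \<Rightarrow> nat \<Rightarrow> nat \<Rightarrow> (nat \<Rightarrow> real) \<Rightarrow> (nat \<Rightarrow> complex mat)
     \<Rightarrow> complex mat \<Rightarrow> complex mat \<Rightarrow> bool" where
  "randomization_procedure n S m N p U \<rho>a \<rho>0 \<longleftrightarrow>
     m \<ge> n \<and> (\<forall>i<N. p i \<ge> 0) \<and> (\<Sum>i<N. p i) = 1 \<and> (\<forall>i<N. unitary_op m (U i))
     \<and> density_mat (m - n) \<rho>a \<and> density_mat m \<rho>0
     \<and> (\<forall>\<phi>\<in>S. mixture (2^m) N p U (kron_mat (proj \<phi>) \<rho>a) = \<rho>0)"

definition B_states :: "complex vec set" where
  "B_states = {vec_of_list [complex_of_real (cos \<theta>), complex_of_real (sin \<theta>)] | \<theta>. 0 \<le> \<theta> \<and> \<theta> < 2 * pi}"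

definition B_tensor :: "nat \<Rightarrow> complex vec set" where
  "B_tensor n = {tensor_list bs | bs. length bs = n \<and> set bs \<subseteq> B_states}"

end

theory Submission
  imports Defs
begin


lemma adj_dims[simp]: "dim_row (mat_adjoint A) = dim_col A" "dim_col (mat_adjoint A) = dim_row A"
  by (auto simp: mat_adjoint_def)

lemma adj_index[simp]: "i < dim_col A \<Longrightarrow> j < dim_row A \<Longrightarrow> mat_adjoint A $$ (i,j) = cnj (A $$ (j,i))"
  by (auto simp: mat_adjoint_def mat_of_rows_index)

lemma sum_split_prod:
  fixes f :: "nat \<Rightarrow> 'a::comm_monoid_add"
  shows "(\<Sum>k<a*b. f k) = (\<Sum>k1<a. \<Sum>k2<b. f (k1*b + k2))"
proof (induction a)
  case 0 then show ?case by simp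
next
  case (Suc a)
  have "{..<Suc a * b} = {..<a*b} \<union> {a*b..<a*b+b}" by auto
  then have "(\<Sum>k<Suc a*b. f k) = (\<Sum>k<a*b. f k) + (\<Sum>k\<in>{a*b..<a*b+b}. f k)"
    by (simp add: sum.union_disjoint ivl_disj_int)
  also have "(\<Sum>k\<in>{a*b..<a*b+b}. f k) = (\<Sum>k2<b. f (a*b+k2))"
    by (rule sum.reindex_bij_witness[of _ "\<lambda>k. a*b+k" "\<lambda>k. k - a*b"]) auto
  finally show ?case using Suc by simp
qed

lemma sum_split_divmod:
  fixes f :: "nat \<Rightarrow> nat \<Rightarrow> 'a::comm_monoid_add"
  shows "(\<Sum>k<a*b. f (k div b) (k mod b)) = (\<Sum>k1<a. \<Sum>k2<b. f k1 k2)"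
proof -
  have "(\<Sum>k<a*b. f (k div b) (k mod b)) = (\<Sum>k1<a. \<Sum>k2<b. f ((k1*b+k2) div b) ((k1*b+k2) mod b))"
    by (rule sum_split_prod)
  also have "\<dots> = (\<Sum>k1<a. \<Sum>k2<b. f k1 k2)"
    by (intro sum.cong refl) auto
  finally show ?thesis .
qed

lemma kron_mat_dims[simp]: "dim_row (kron_mat A B) = dim_row A * dim_row B"
  "dim_col (kron_mat A B) = dim_col A * dim_col B"
  by (auto simp: kron_mat_def)

lemma kron_mat_index[simp]: "i < dim_row A * dim_row B \<Longrightarrow> j < dim_col A * dim_col B \<Longrightarrow>
  kron_mat A B $$ (i,j) = A $$ (i div dim_row B, j div dim_col B) * B $$ (i mod dim_row B, j mod dim_col B)"
  by (auto simp: kron_mat_def)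

lemma kron_vec_dim[simp]: "dim_vec (kron_vec u v) = dim_vec u * dim_vec v"
  by (auto simp: kron_vec_def)

lemma kron_vec_index[simp]: "i < dim_vec u * dim_vec v \<Longrightarrow>
  kron_vec u v $ i = u $ (i div dim_vec v) * v $ (i mod dim_vec v)"
  by (auto simp: kron_vec_def)

lemma kron_mat_carrier[simp]: "A \<in> carrier_mat a1 a2 \<Longrightarrow> B \<in> carrier_mat b1 b2 \<Longrightarrow>
  kron_mat A B \<in> carrier_mat (a1*b1) (a2*b2)"
  by (rule carrier_matI) (auto dest: carrier_matD)

lemma adj_carrier[simp]: "A \<in> carrier_mat a b \<Longrightarrow> mat_adjoint A \<in> carrier_mat b a"
  by (rule carrier_matI) (auto dest: carrier_matD)

lemma div_lt_mult: "i < a * (b::nat) \<Longrightarrow> i div b < a"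
  by (rule less_mult_imp_div_less)

lemma mod_lt_mult: "i < a * (b::nat) \<Longrightarrow> i mod b < b"
  by (cases "b = 0") auto

lemma mult_index':
  assumes "A \<in> carrier_mat a b" "C \<in> carrier_mat b c" "x < a" "y < c"
  shows "(A * C) $$ (x,y) = (\<Sum>k<b. A $$ (x,k) * C $$ (k,y))"
proof -
  have dA: "dim_row A = a" "dim_col A = b" and dC: "dim_row C = b" "dim_col C = c" using assms(1,2) by auto
  have "(A * C) $$ (x,y) = row A x \<bullet> col C y" using assms(3,4) dA dC by simp
  also have "\<dots> = (\<Sum>k\<in>{0..<b}. row A x $ k * col C y $ k)" unfolding scalar_prod_def using dC by simp
  also have "\<dots> = (\<Sum>k<b. A $$ (x,k) * C $$ (k,y))"
    unfolding atLeast0LessThan by (rule sum.cong) (use assms(3,4) dA dC in auto)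
  finally show ?thesis .
qed



lemma kron_mixed:
  assumes A: "A \<in> carrier_mat a1 a2" and B: "B \<in> carrier_mat b1 b2"
    and C: "C \<in> carrier_mat a2 a3" and D: "D \<in> carrier_mat b2 b3"
  shows "kron_mat A B * kron_mat C D = kron_mat (A * C) (B * D)"
proof (rule eq_matI)
  fix i j assume i: "i < dim_row (kron_mat (A * C) (B * D))" and j: "j < dim_col (kron_mat (A * C) (B * D))"
  have i': "i < a1 * b1" and j': "j < a3 * b3" using i j A B C D by auto
  have d: "i div b1 < a1" "i mod b1 < b1" "j div b3 < a3" "j mod b3 < b3"
    using i' j' div_lt_mult mod_lt_mult by auto
  have KAB: "kron_mat A B \<in> carrier_mat (a1*b1) (a2*b2)" "kron_mat C D \<in> carrier_mat (a2*b2) (a3*b3)"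
    using A B C D by auto
  have "(kron_mat A B * kron_mat C D) $$ (i,j) = (\<Sum>k<a2*b2. kron_mat A B $$ (i,k) * kron_mat C D $$ (k,j))"
    by (rule mult_index'[OF KAB i' j'])
  also have "\<dots> = (\<Sum>k<a2*b2. A $$ (i div b1, k div b2) * B $$ (i mod b1, k mod b2) * (C $$ (k div b2, j div b3) * D $$ (k mod b2, j mod b3)))"
  proof (rule sum.cong[OF refl])
    fix k assume "k \<in> {..<a2*b2}"
    then have "k < a2*b2" by simp
    then show "kron_mat A B $$ (i,k) * kron_mat C D $$ (k,j) = A $$ (i div b1, k div b2) * B $$ (i mod b1, k mod b2) * (C $$ (k div b2, j div b3) * D $$ (k mod b2, j mod b3))"
      using A B C D i' j' by (subst kron_mat_index, simp, simp)+ simp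
  qed
  also have "\<dots> = (\<Sum>k1<a2. \<Sum>k2<b2. A $$ (i div b1, k1) * B $$ (i mod b1, k2) * (C $$ (k1, j div b3) * D $$ (k2, j mod b3)))"
    by (rule sum_split_divmod[where f = "\<lambda>k1 k2. A $$ (i div b1, k1) * B $$ (i mod b1, k2) * (C $$ (k1, j div b3) * D $$ (k2, j mod b3))"])
  also have "\<dots> = (\<Sum>k1<a2. A $$ (i div b1, k1) * C $$ (k1, j div b3)) * (\<Sum>k2<b2. B $$ (i mod b1, k2) * D $$ (k2, j mod b3))"
    by (simp add: sum_product mult_ac)
  also have "\<dots> = (A * C) $$ (i div b1, j div b3) * (B * D) $$ (i mod b1, j mod b3)"
    using mult_index'[OF A C d(1,3)] mult_index'[OF B D d(2,4)] by simp
  also have "\<dots> = kron_mat (A * C) (B * D) $$ (i,j)"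
    using A B C D i' j' by simp
  finally show "(kron_mat A B * kron_mat C D) $$ (i,j) = kron_mat (A * C) (B * D) $$ (i,j)" .
qed (use A B C D in auto)

lemma kron_adj:
  assumes A: "A \<in> carrier_mat a1 a2" and B: "B \<in> carrier_mat b1 b2"
  shows "mat_adjoint (kron_mat A B) = kron_mat (mat_adjoint A) (mat_adjoint B)"
proof (rule eq_matI)
  fix i j assume "i < dim_row (kron_mat (mat_adjoint A) (mat_adjoint B))" "j < dim_col (kron_mat (mat_adjoint A) (mat_adjoint B))"
  then have i: "i < a2*b2" and j: "j < a1*b1" using A B by auto
  have d: "i div b2 < a2" "i mod b2 < b2" "j div b1 < a1" "j mod b1 < b1"
    using i j div_lt_mult mod_lt_mult by auto
  show "mat_adjoint (kron_mat A B) $$ (i, j) = kron_mat (mat_adjoint A) (mat_adjoint B) $$ (i, j)"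
    using A B i j d by simp
qed (use A B in auto)

lemma kron_one: "kron_mat (1\<^sub>m a) (1\<^sub>m b) = 1\<^sub>m (a*b)"
proof (rule eq_matI)
  fix i j assume "i < dim_row (1\<^sub>m (a * b))" "j < dim_col (1\<^sub>m (a * b))"
  then have i: "i < a*b" and j: "j < a*b" by auto
  have d: "i div b < a" "i mod b < b" "j div b < a" "j mod b < b"
    using i j div_lt_mult mod_lt_mult by auto
  have "(i div b = j div b \<and> i mod b = j mod b) = (i = j)"
    using div_mult_mod_eq[of i b] div_mult_mod_eq[of j b] by metis
  then show "kron_mat (1\<^sub>m a) (1\<^sub>m b) $$ (i, j) = 1\<^sub>m (a * b) $$ (i, j)"
    using i j d by (simp add: \<open>(i div b = j div b \<and> i mod b = j mod b) = (i = j)\<close>[symmetric])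
qed auto

lemma proj_dims[simp]: "dim_row (proj v) = dim_vec v" "dim_col (proj v) = dim_vec v"
  by (auto simp: proj_def)

lemma proj_index[simp]: "i < dim_vec v \<Longrightarrow> j < dim_vec v \<Longrightarrow> proj v $$ (i,j) = v $ i * cnj (v $ j)"
  by (auto simp: proj_def)

lemma proj_kron: "proj (kron_vec u v) = kron_mat (proj u) (proj v)"
proof (rule eq_matI)
  fix i j assume "i < dim_row (kron_mat (proj u) (proj v))" "j < dim_col (kron_mat (proj u) (proj v))"
  then have i: "i < dim_vec u * dim_vec v" and j: "j < dim_vec u * dim_vec v" by auto
  have d: "i div dim_vec v < dim_vec u" "i mod dim_vec v < dim_vec v" "j div dim_vec v < dim_vec u" "j mod dim_vec v < dim_vec v"
    using i j div_lt_mult mod_lt_mult by auto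
  show "proj (kron_vec u v) $$ (i, j) = kron_mat (proj u) (proj v) $$ (i, j)"
    using i j d by simp
qed auto


lemma sum2: "(\<Sum>k<(2::nat). f k) = f 0 + f 1"
  by (simp add: numeral_2_eq_2)

definition J2 :: "complex mat" where
  "J2 = mat 2 2 (\<lambda>(i,j). if i = 0 \<and> j = 1 then -1 else if i = 1 \<and> j = 0 then 1 else 0)"

definition Wq :: "nat \<Rightarrow> complex mat" where
  "Wq t = (if t = 0 then 1\<^sub>m 2 else J2)"

fun Uop :: "nat \<Rightarrow> nat \<Rightarrow> complex mat" where
  "Uop 0 i = 1\<^sub>m 1"
| "Uop (Suc n) i = kron_mat (Wq (i div 2^n)) (Uop n (i mod 2^n))"

lemma J2_carrier[simp]: "J2 \<in> carrier_mat 2 2"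
  unfolding J2_def by (rule carrier_matI) simp_all

lemma J2_dims[simp]: "dim_row J2 = 2" "dim_col J2 = 2"
  unfolding J2_def by simp_all

lemma Wq_carrier[simp]: "Wq t \<in> carrier_mat 2 2"
  unfolding Wq_def by auto

lemma less2_cases: "(i::nat) < 2 \<Longrightarrow> i = 0 \<or> i = 1" by auto

lemma J2_unitary: "mat_adjoint J2 * J2 = 1\<^sub>m 2"
proof (rule eq_matI)
  fix i j assume "i < dim_row (1\<^sub>m 2 :: complex mat)" "j < dim_col (1\<^sub>m 2 :: complex mat)"
  then have i: "i < 2" and j: "j < 2" by auto
  have "(mat_adjoint J2 * J2) $$ (i,j) = (\<Sum>k<2. mat_adjoint J2 $$ (i,k) * J2 $$ (k,j))"
    by (rule mult_index'[OF adj_carrier[OF J2_carrier] J2_carrier i j])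
  also have "\<dots> = (\<Sum>k<2. cnj (J2 $$ (k,i)) * J2 $$ (k,j))"
    by (rule sum.cong) (use i J2_carrier in auto)
  also have "\<dots> = 1\<^sub>m 2 $$ (i,j)"
    using less2_cases[OF i] less2_cases[OF j] by (auto simp: sum2 J2_def)
  finally show "(mat_adjoint J2 * J2) $$ (i,j) = 1\<^sub>m 2 $$ (i,j)" .
qed (auto simp: J2_def)

lemma adj_one: "mat_adjoint (1\<^sub>m k :: complex mat) = 1\<^sub>m k"
  by (rule eq_matI) auto

lemma Wq_unitary: "mat_adjoint (Wq t) * Wq t = 1\<^sub>m 2"
  unfolding Wq_def using J2_unitary by (auto simp: adj_one)

lemma Uop_carrier[simp]: "Uop n i \<in> carrier_mat (2^n) (2^n)"
  by (induction n arbitrary: i) auto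

lemma Uop_unitary: "mat_adjoint (Uop n i) * Uop n i = 1\<^sub>m (2^n)"
proof (induction n arbitrary: i)
  case 0 then show ?case by (simp add: adj_one)
next
  case (Suc n)
  have "mat_adjoint (Uop (Suc n) i) * Uop (Suc n) i
     = kron_mat (mat_adjoint (Wq (i div 2^n))) (mat_adjoint (Uop n (i mod 2^n))) * kron_mat (Wq (i div 2^n)) (Uop n (i mod 2^n))"
    by (simp add: kron_adj[OF Wq_carrier Uop_carrier])
  also have "\<dots> = kron_mat (mat_adjoint (Wq (i div 2^n)) * Wq (i div 2^n)) (mat_adjoint (Uop n (i mod 2^n)) * Uop n (i mod 2^n))"
    by (rule kron_mixed) auto
  also have "\<dots> = 1\<^sub>m (2^Suc n)"
    using Wq_unitary Suc.IH by (simp add: kron_one)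
  finally show ?case .
qed

lemma Wq_dims[simp]: "dim_row (Wq t) = 2" "dim_col (Wq t) = 2"
  using carrier_matD[OF Wq_carrier[of t]] by auto

lemma Uop_dims[simp]: "dim_row (Uop n i) = 2^n" "dim_col (Uop n i) = 2^n"
  using carrier_matD[OF Uop_carrier[of n i]] by auto

lemma conj_kron:
  assumes A: "A \<in> carrier_mat a a" and B: "B \<in> carrier_mat b b"
    and W: "W \<in> carrier_mat a a" and U: "U \<in> carrier_mat b b"
  shows "kron_mat W U * kron_mat A B * mat_adjoint (kron_mat W U) = kron_mat (W * A * mat_adjoint W) (U * B * mat_adjoint U)"
proof -
  have "kron_mat W U * kron_mat A B = kron_mat (W * A) (U * B)"
    by (rule kron_mixed[OF W U A B])
  moreover have "mat_adjoint (kron_mat W U) = kron_mat (mat_adjoint W) (mat_adjoint U)"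
    by (rule kron_adj[OF W U])
  moreover have "kron_mat (W * A) (U * B) * kron_mat (mat_adjoint W) (mat_adjoint U) = kron_mat (W * A * mat_adjoint W) (U * B * mat_adjoint U)"
    by (rule kron_mixed) (use A B W U in auto)
  ultimately show ?thesis by simp
qed

definition Tsum :: "nat \<Rightarrow> complex mat \<Rightarrow> complex mat" where
  "Tsum n X = mat (2^n) (2^n) (\<lambda>rc. \<Sum>i<2^n. (Uop n i * X * mat_adjoint (Uop n i)) $$ rc)"

definition Qsum :: "complex mat \<Rightarrow> complex mat" where
  "Qsum X = mat 2 2 (\<lambda>rc. \<Sum>t<2. (Wq t * X * mat_adjoint (Wq t)) $$ rc)"

lemma Tsum_step:
  assumes A: "A \<in> carrier_mat 2 2" and B: "B \<in> carrier_mat (2^n) (2^n)"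
  shows "Tsum (Suc n) (kron_mat A B) = kron_mat (Qsum A) (Tsum n B)"
proof (rule eq_matI)
  fix r c assume "r < dim_row (kron_mat (Qsum A) (Tsum n B))" "c < dim_col (kron_mat (Qsum A) (Tsum n B))"
  then have r: "r < 2 * 2^n" and c: "c < 2 * 2^n" by (auto simp: Qsum_def Tsum_def)
  have d: "r div 2^n < 2" "r mod 2^n < 2^n" "c div 2^n < 2" "c mod 2^n < 2^n"
    using r c div_lt_mult mod_lt_mult by auto
  have "Tsum (Suc n) (kron_mat A B) $$ (r,c) = (\<Sum>i<2*2^n. (Uop (Suc n) i * kron_mat A B * mat_adjoint (Uop (Suc n) i)) $$ (r,c))"
    unfolding Tsum_def using r c by simp
  also have "\<dots> = (\<Sum>i<2*2^n. (Wq (i div 2^n) * A * mat_adjoint (Wq (i div 2^n))) $$ (r div 2^n, c div 2^n)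
       * (Uop n (i mod 2^n) * B * mat_adjoint (Uop n (i mod 2^n))) $$ (r mod 2^n, c mod 2^n))"
  proof (rule sum.cong[OF refl])
    fix i
    have e: "Uop (Suc n) i * kron_mat A B * mat_adjoint (Uop (Suc n) i) =
      kron_mat (Wq (i div 2^n) * A * mat_adjoint (Wq (i div 2^n))) (Uop n (i mod 2^n) * B * mat_adjoint (Uop n (i mod 2^n)))"
      by (simp only: Uop.simps conj_kron[OF A B Wq_carrier Uop_carrier])
    have c1: "Wq (i div 2^n) * A * mat_adjoint (Wq (i div 2^n)) \<in> carrier_mat 2 2"
      using mult_carrier_mat[OF mult_carrier_mat[OF Wq_carrier A] adj_carrier[OF Wq_carrier]] .
    have c2: "Uop n (i mod 2^n) * B * mat_adjoint (Uop n (i mod 2^n)) \<in> carrier_mat (2^n) (2^n)"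
      using mult_carrier_mat[OF mult_carrier_mat[OF Uop_carrier B] adj_carrier[OF Uop_carrier]] .
    show "(Uop (Suc n) i * kron_mat A B * mat_adjoint (Uop (Suc n) i)) $$ (r,c) = (Wq (i div 2^n) * A * mat_adjoint (Wq (i div 2^n))) $$ (r div 2^n, c div 2^n)
       * (Uop n (i mod 2^n) * B * mat_adjoint (Uop n (i mod 2^n))) $$ (r mod 2^n, c mod 2^n)"
      unfolding e using c1 c2 r c by (subst kron_mat_index) auto
  qed
  also have "\<dots> = (\<Sum>t<2. \<Sum>j<2^n. (Wq t * A * mat_adjoint (Wq t)) $$ (r div 2^n, c div 2^n)
       * (Uop n j * B * mat_adjoint (Uop n j)) $$ (r mod 2^n, c mod 2^n))"
    by (rule sum_split_divmod[where f = "\<lambda>t j. (Wq t * A * mat_adjoint (Wq t)) $$ (r div 2^n, c div 2^n)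
       * (Uop n j * B * mat_adjoint (Uop n j)) $$ (r mod 2^n, c mod 2^n)"])
  also have "\<dots> = Qsum A $$ (r div 2^n, c div 2^n) * Tsum n B $$ (r mod 2^n, c mod 2^n)"
    unfolding Qsum_def Tsum_def using d by (simp add: sum_product)
  also have "\<dots> = kron_mat (Qsum A) (Tsum n B) $$ (r,c)"
    using r c by (simp add: Qsum_def Tsum_def)
  finally show "Tsum (Suc n) (kron_mat A B) $$ (r,c) = kron_mat (Qsum A) (Tsum n B) $$ (r,c)" .
qed (auto simp: Qsum_def Tsum_def)


lemma J2_conj:
  assumes X: "X \<in> carrier_mat 2 2" and i: "i < 2" and j: "j < 2"
  shows "(J2 * X * mat_adjoint J2) $$ (i,j) =
    (if i = 0 \<and> j = 0 then X $$ (1,1) else if i = 0 \<and> j = 1 then - X $$ (1,0)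
     else if i = 1 \<and> j = 0 then - X $$ (0,1) else X $$ (0,0))"
proof -
  have JX: "J2 * X \<in> carrier_mat 2 2" using mult_carrier_mat[OF J2_carrier X] .
  have "(J2 * X * mat_adjoint J2) $$ (i,j) = (\<Sum>l<2. (J2 * X) $$ (i,l) * mat_adjoint J2 $$ (l,j))"
    by (rule mult_index'[OF JX adj_carrier[OF J2_carrier] i j])
  also have "\<dots> = (\<Sum>l<2. (\<Sum>k<2. J2 $$ (i,k) * X $$ (k,l)) * cnj (J2 $$ (j,l)))"
  proof (rule sum.cong[OF refl])
    fix l assume "l \<in> {..<2::nat}" then have l: "l < 2" by simp
    show "(J2 * X) $$ (i,l) * mat_adjoint J2 $$ (l,j) = (\<Sum>k<2. J2 $$ (i,k) * X $$ (k,l)) * cnj (J2 $$ (j,l))"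
      using mult_index'[OF J2_carrier X i l] l j by simp
  qed
  also have "\<dots> = (if i = 0 \<and> j = 0 then X $$ (1,1) else if i = 0 \<and> j = 1 then - X $$ (1,0)
     else if i = 1 \<and> j = 0 then - X $$ (0,1) else X $$ (0,0))"
    using less2_cases[OF i] less2_cases[OF j] by (auto simp: sum2 J2_def)
  finally show ?thesis .
qed

lemma qubit_twirl:
  assumes cs: "c^2 + s^2 = (1::real)"
  shows "Qsum (proj (vec_of_list [complex_of_real c, complex_of_real s])) = 1\<^sub>m 2"
proof (rule eq_matI)
  let ?b = "vec_of_list [complex_of_real c, complex_of_real s]"
  let ?P = "proj ?b"
  have P: "?P \<in> carrier_mat 2 2" by (rule carrier_matI) simp_all
  have b0: "?b $ 0 = complex_of_real c" and b1: "?b $ 1 = complex_of_real s"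
    by (simp_all add: vec_of_list_index)
  have cs': "complex_of_real c * complex_of_real c + complex_of_real s * complex_of_real s = 1"
    using cs by (metis of_real_1 of_real_add of_real_mult power2_eq_square)
  fix i j assume "i < dim_row (1\<^sub>m 2 :: complex mat)" "j < dim_col (1\<^sub>m 2 :: complex mat)"
  then have i: "i < 2" and j: "j < 2" by auto
  have "Qsum ?P $$ (i,j) = (Wq 0 * ?P * mat_adjoint (Wq 0)) $$ (i,j) + (Wq 1 * ?P * mat_adjoint (Wq 1)) $$ (i,j)"
    unfolding Qsum_def using i j by (simp add: sum2)
  also have "\<dots> = ?P $$ (i,j) + (J2 * ?P * mat_adjoint J2) $$ (i,j)"
    using P by (simp add: Wq_def adj_one)
  also have "\<dots> = 1\<^sub>m 2 $$ (i,j)"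
    unfolding J2_conj[OF P i j] using less2_cases[OF i] less2_cases[OF j] i j
    by (auto simp: b0 b1 cs' mult.commute add.commute)
  finally show "Qsum ?P $$ (i,j) = 1\<^sub>m 2 $$ (i,j)" .
qed (auto simp: Qsum_def)

lemma B_statesE:
  assumes "b \<in> B_states"
  obtains c s where "b = vec_of_list [complex_of_real c, complex_of_real s]" "c^2 + s^2 = (1::real)"
  using assms unfolding B_states_def by (auto intro: sin_cos_squared_add2)

lemma tensor_twirl:
  assumes "set bs \<subseteq> B_states"
  shows "dim_vec (tensor_list bs) = 2^length bs \<and> Tsum (length bs) (proj (tensor_list bs)) = 1\<^sub>m (2^length bs)"
  using assms
proof (induction bs)
  case Nil
  have P: "proj (vec 1 (\<lambda>_. 1::complex)) \<in> carrier_mat 1 1" by (rule carrier_matI) simp_all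
  have "Tsum 0 (proj (vec 1 (\<lambda>_. 1))) = 1\<^sub>m 1"
  proof (rule eq_matI)
    fix i j assume "i < dim_row (1\<^sub>m 1 :: complex mat)" "j < dim_col (1\<^sub>m 1 :: complex mat)"
    then have "i = 0" "j = 0" by auto
    then show "Tsum 0 (proj (vec 1 (\<lambda>_. 1))) $$ (i, j) = 1\<^sub>m 1 $$ (i, j)"
      unfolding Tsum_def using P by (simp add: adj_one)
  qed (auto simp: Tsum_def)
  then show ?case by simp
next
  case (Cons b bs)
  then have b: "b \<in> B_states" and bs: "set bs \<subseteq> B_states" by auto
  from Cons.IH[OF bs] have d: "dim_vec (tensor_list bs) = 2^length bs"
    and T: "Tsum (length bs) (proj (tensor_list bs)) = 1\<^sub>m (2^length bs)" by auto
  from b obtain c s where bdef: "b = vec_of_list [complex_of_real c, complex_of_real s]" and cs: "c^2 + s^2 = 1"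
    by (rule B_statesE)
  have Pb: "proj b \<in> carrier_mat 2 2" unfolding bdef by (rule carrier_matI) simp_all
  have Pt: "proj (tensor_list bs) \<in> carrier_mat (2^length bs) (2^length bs)" using d by (intro carrier_matI) simp_all
  have "Tsum (length (b # bs)) (proj (tensor_list (b # bs))) = Tsum (Suc (length bs)) (kron_mat (proj b) (proj (tensor_list bs)))"
    by (simp add: proj_kron)
  also have "\<dots> = kron_mat (Qsum (proj b)) (Tsum (length bs) (proj (tensor_list bs)))"
    by (rule Tsum_step[OF Pb Pt])
  also have "\<dots> = 1\<^sub>m (2^length (b # bs))"
    unfolding T bdef qubit_twirl[OF cs] kron_one by simp
  finally show ?case using d bdef by simp
qed


lemma qf_expand:
  assumes A: "A \<in> carrier_mat D D" and v: "v \<in> carrier_vec D"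
  shows "conjugate v \<bullet> (A *\<^sub>v v) = (\<Sum>r<D. cnj (v $ r) * (\<Sum>c<D. A $$ (r,c) * v $ c))"
proof -
  have dA: "dim_row A = D" "dim_col A = D" and dv: "dim_vec v = D" using A v by auto
  have "conjugate v \<bullet> (A *\<^sub>v v) = (\<Sum>r\<in>{0..<D}. conjugate v $ r * (A *\<^sub>v v) $ r)"
    unfolding scalar_prod_def using dA by simp
  also have "\<dots> = (\<Sum>r<D. cnj (v $ r) * (\<Sum>c<D. A $$ (r,c) * v $ c))"
    unfolding atLeast0LessThan
  proof (rule sum.cong[OF refl])
    fix r assume "r \<in> {..<D}" then have r: "r < D" by simp
    have "(A *\<^sub>v v) $ r = row A r \<bullet> v" using r dA by simp
    also have "\<dots> = (\<Sum>c<D. A $$ (r,c) * v $ c)"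
      unfolding scalar_prod_def dv atLeast0LessThan using r dA by (intro sum.cong) auto
    finally show "conjugate v $ r * (A *\<^sub>v v) $ r = cnj (v $ r) * (\<Sum>c<D. A $$ (r,c) * v $ c)"
      using r dv by simp
  qed
  finally show ?thesis .
qed

definition dmat :: "nat \<Rightarrow> complex mat" where
  "dmat k = mat (2^k) (2^k) (\<lambda>(r,c). if r = c then complex_of_real (1/2^k) else 0)"

lemma dmat_carrier[simp]: "dmat k \<in> carrier_mat (2^k) (2^k)"
  unfolding dmat_def by (rule carrier_matI) simp_all

lemma dmat_density: "density_mat k (dmat k)"
proof -
  have adj: "mat_adjoint (dmat k) = dmat k"
    by (rule eq_matI) (auto simp: dmat_def)
  have form: "conjugate v \<bullet> (dmat k *\<^sub>v v) \<in> \<real> \<and> Re (conjugate v \<bullet> (dmat k *\<^sub>v v)) \<ge> 0"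
    if v: "v \<in> carrier_vec (2^k)" for v
  proof -
    have "conjugate v \<bullet> (dmat k *\<^sub>v v) = (\<Sum>r<2^k. cnj (v $ r) * (\<Sum>c<2^k. dmat k $$ (r,c) * v $ c))"
      by (rule qf_expand[OF dmat_carrier v])
    also have "\<dots> = (\<Sum>r<(2::nat)^k. complex_of_real (1/2^k * (cmod (v $ r))^2))"
    proof (rule sum.cong[OF refl])
      fix r assume "r \<in> {..<(2::nat)^k}" then have r: "r < 2^k" by simp
      have "(\<Sum>c<2^k. dmat k $$ (r,c) * v $ c) = (\<Sum>c<2^k. if c = r then complex_of_real (1/2^k) * v $ r else 0)"
        by (rule sum.cong) (auto simp: dmat_def r)
      also have "\<dots> = complex_of_real (1/2^k) * v $ r" using r by simp
      finally have S: "(\<Sum>c<2^k. dmat k $$ (r,c) * v $ c) = complex_of_real (1/2^k) * v $ r" .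
      have h: "v $ r * cnj (v $ r) = complex_of_real ((cmod (v $ r))^2)" by (rule complex_norm_square[symmetric])
      have "cnj (v $ r) * (\<Sum>c<2^k. dmat k $$ (r,c) * v $ c) = complex_of_real (1/2^k) * (v $ r * cnj (v $ r))"
        unfolding S by (simp only: mult_ac)
      also have "\<dots> = complex_of_real (1/2^k * (cmod (v $ r))^2)" by (simp only: h of_real_mult)
      finally show "cnj (v $ r) * (\<Sum>c<2^k. dmat k $$ (r,c) * v $ c) = complex_of_real (1/2^k * (cmod (v $ r))^2)" .
    qed
    also have "\<dots> = complex_of_real (\<Sum>r<(2::nat)^k. 1/2^k * (cmod (v $ r))^2)" by simp
    finally have e: "conjugate v \<bullet> (dmat k *\<^sub>v v) = complex_of_real (\<Sum>r<(2::nat)^k. 1/2^k * (cmod (v $ r))^2)" .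
    show ?thesis unfolding e by (auto intro!: sum_nonneg)
  qed
  have tr: "mat_trace (dmat k) = 1"
    unfolding mat_trace_def by (simp add: dmat_def)
  show ?thesis unfolding density_mat_def using adj form tr by auto
qed

lemma kron_dmat0:
  assumes P: "P \<in> carrier_mat a b"
  shows "kron_mat P (dmat 0) = P"
  by (rule eq_matI) (use P in \<open>auto simp: dmat_def\<close>)

lemma part1:
  "randomization_procedure n (B_tensor n) n (2^n) (\<lambda>_. 1/2^n) (Uop n) (dmat 0) (dmat n)
   \<and> shannon (2^n) (\<lambda>_. 1/2^n) = real n"
proof -
  have mix: "mixture (2^n) (2^n) (\<lambda>_. 1/2^n) (Uop n) (kron_mat (proj \<phi>) (dmat 0)) = dmat n"
    if phi: "\<phi> \<in> B_tensor n" for \<phi>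
  proof -
    from phi obtain bs where bs: "\<phi> = tensor_list bs" "length bs = n" "set bs \<subseteq> B_states"
      unfolding B_tensor_def by auto
    from tensor_twirl[OF bs(3)] bs have d: "dim_vec \<phi> = 2^n" and T: "Tsum n (proj \<phi>) = 1\<^sub>m (2^n)" by auto
    have P: "proj \<phi> \<in> carrier_mat (2^n) (2^n)" using d by (intro carrier_matI) simp_all
    show ?thesis
    proof (rule eq_matI)
      fix r c assume "r < dim_row (dmat n)" "c < dim_col (dmat n)"
      then have r: "r < 2^n" and c: "c < 2^n" by (auto simp: dmat_def)
      have "mixture (2^n) (2^n) (\<lambda>_. 1/2^n) (Uop n) (kron_mat (proj \<phi>) (dmat 0)) $$ (r,c)
          = complex_of_real (1/2^n) * Tsum n (proj \<phi>) $$ (r,c)"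
        unfolding mixture_def Tsum_def kron_dmat0[OF P] using r c by (simp add: sum_distrib_left)
      also have "\<dots> = dmat n $$ (r,c)" unfolding T using r c by (simp add: dmat_def)
      finally show "mixture (2^n) (2^n) (\<lambda>_. 1/2^n) (Uop n) (kron_mat (proj \<phi>) (dmat 0)) $$ (r,c) = dmat n $$ (r,c)" .
    qed (auto simp: mixture_def dmat_def)
  qed
  have un: "unitary_op n (Uop n i)" for i
    unfolding unitary_op_def using Uop_unitary by auto
  have sp: "(\<Sum>i<(2::nat)^n. (1::real)/2^n) = 1" by simp
  have "randomization_procedure n (B_tensor n) n (2^n) (\<lambda>_. 1/2^n) (Uop n) (dmat 0) (dmat n)"
    unfolding randomization_procedure_def using mix un sp dmat_density[of 0] dmat_density[of n] by auto
  moreover have "shannon (2^n) (\<lambda>_. 1/2^n) = real n"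
  proof -
    have "log 2 (1/2^n) = - real n" by (simp add: log_divide)
    then show ?thesis unfolding shannon_def by simp
  qed
  ultimately show ?thesis by simp
qed


lemma adj_move:
  fixes A :: "complex mat"
  assumes A: "A \<in> carrier_mat D1 D2" and v: "v \<in> carrier_vec D1" and w: "w \<in> carrier_vec D2"
  shows "conjugate v \<bullet> (A *\<^sub>v w) = conjugate (mat_adjoint A *\<^sub>v v) \<bullet> w"
proof -
  have dA: "dim_row A = D1" "dim_col A = D2" and dv: "dim_vec v = D1" and dw: "dim_vec w = D2"
    using A v w by auto
  have "conjugate v \<bullet> (A *\<^sub>v w) = (\<Sum>r<D1. cnj (v $ r) * (\<Sum>c<D2. A $$ (r,c) * w $ c))"
  proof -
    have "conjugate v \<bullet> (A *\<^sub>v w) = (\<Sum>r\<in>{0..<D1}. conjugate v $ r * (A *\<^sub>v w) $ r)"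
      unfolding scalar_prod_def using dA by simp
    also have "\<dots> = (\<Sum>r<D1. cnj (v $ r) * (\<Sum>c<D2. A $$ (r,c) * w $ c))"
      unfolding atLeast0LessThan
    proof (rule sum.cong[OF refl])
      fix r assume "r \<in> {..<D1}" then have r: "r < D1" by simp
      have "(A *\<^sub>v w) $ r = row A r \<bullet> w" using r dA by simp
      also have "\<dots> = (\<Sum>c<D2. A $$ (r,c) * w $ c)"
        unfolding scalar_prod_def dw atLeast0LessThan using r dA by (intro sum.cong) auto
      finally show "conjugate v $ r * (A *\<^sub>v w) $ r = cnj (v $ r) * (\<Sum>c<D2. A $$ (r,c) * w $ c)"
        using r dv by simp
    qed
    finally show ?thesis .
  qed
  also have "\<dots> = (\<Sum>r<D1. \<Sum>c<D2. cnj (v $ r) * A $$ (r,c) * w $ c)"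
    by (simp add: sum_distrib_left mult.assoc)
  also have "\<dots> = (\<Sum>c<D2. \<Sum>r<D1. cnj (v $ r) * A $$ (r,c) * w $ c)"
    by (rule sum.swap)
  also have "\<dots> = (\<Sum>c<D2. cnj ((mat_adjoint A *\<^sub>v v) $ c) * w $ c)"
  proof (rule sum.cong[OF refl])
    fix c assume "c \<in> {..<D2}" then have c: "c < D2" by simp
    have "(mat_adjoint A *\<^sub>v v) $ c = row (mat_adjoint A) c \<bullet> v" using c dA by simp
    also have "\<dots> = (\<Sum>r<D1. cnj (A $$ (r,c)) * v $ r)"
      unfolding scalar_prod_def dv atLeast0LessThan using c dA by (intro sum.cong) auto
    finally have e: "(mat_adjoint A *\<^sub>v v) $ c = (\<Sum>r<D1. cnj (A $$ (r,c)) * v $ r)" .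
    show "(\<Sum>r<D1. cnj (v $ r) * A $$ (r,c) * w $ c) = cnj ((mat_adjoint A *\<^sub>v v) $ c) * w $ c"
      unfolding e by (simp add: sum_distrib_left sum_distrib_right mult_ac)
  qed
  also have "\<dots> = conjugate (mat_adjoint A *\<^sub>v v) \<bullet> w"
    unfolding scalar_prod_def dw atLeast0LessThan using dA by (intro sum.cong) auto
  finally show ?thesis .
qed

lemma adj_adj: "mat_adjoint (mat_adjoint (A :: complex mat)) = A"
  by (rule eq_matI) auto

definition ns :: "nat \<Rightarrow> complex vec \<Rightarrow> real" where
  "ns D v = (\<Sum>r<D. (cmod (v $ r))^2)"

lemma ns_nonneg: "ns D v \<ge> 0"
  unfolding ns_def by (auto intro!: sum_nonneg)

lemma self_sprod: fixes v :: "complex vec" assumes v: "v \<in> carrier_vec D" shows "conjugate v \<bullet> v = complex_of_real (ns D v)"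
proof -
  have "conjugate v \<bullet> v = (\<Sum>r<D. cnj (v $ r) * v $ r)"
    unfolding scalar_prod_def atLeast0LessThan using v by (intro sum.cong) auto
  also have "\<dots> = (\<Sum>r<D. complex_of_real ((cmod (v $ r))^2))"
    by (intro sum.cong refl) (metis complex_norm_square mult.commute)
  finally show ?thesis unfolding ns_def by simp
qed

lemma ns_unitary:
  fixes A :: "complex mat"
  assumes A: "A \<in> carrier_mat D D" and u: "mat_adjoint A * A = 1\<^sub>m D" and w: "w \<in> carrier_vec D"
  shows "ns D (A *\<^sub>v w) = ns D w"
proof -
  have Aw: "A *\<^sub>v w \<in> carrier_vec D" using A w by simp
  have "conjugate (A *\<^sub>v w) \<bullet> (A *\<^sub>v w) = conjugate (mat_adjoint A *\<^sub>v (A *\<^sub>v w)) \<bullet> w"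
    by (rule adj_move[OF A Aw w])
  also have "mat_adjoint A *\<^sub>v (A *\<^sub>v w) = w"
    using assoc_mult_mat_vec[OF adj_carrier[OF A] A w, symmetric] u w by simp
  finally have "conjugate (A *\<^sub>v w) \<bullet> (A *\<^sub>v w) = conjugate w \<bullet> w" .
  then show ?thesis using self_sprod[OF Aw] self_sprod[OF w] by simp
qed

lemma unitary_right:
  assumes A: "A \<in> carrier_mat D D" and u: "mat_adjoint A * A = 1\<^sub>m D"
  shows "A * mat_adjoint A = 1\<^sub>m D"
  using mat_mult_left_right_inverse[OF adj_carrier[OF A] A u] .

lemma qf_conj:
  fixes U :: "complex mat"
  assumes U: "U \<in> carrier_mat D D" and Y: "Y \<in> carrier_mat D D" and v: "v \<in> carrier_vec D"
  shows "conjugate v \<bullet> ((U * Y * mat_adjoint U) *\<^sub>v v) = conjugate (mat_adjoint U *\<^sub>v v) \<bullet> (Y *\<^sub>v (mat_adjoint U *\<^sub>v v))"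
proof -
  have w: "mat_adjoint U *\<^sub>v v \<in> carrier_vec D" using mult_mat_vec_carrier[OF adj_carrier[OF U] v] .
  have UY: "U * Y \<in> carrier_mat D D" using mult_carrier_mat[OF U Y] .
  have "(U * Y * mat_adjoint U) *\<^sub>v v = (U * Y) *\<^sub>v (mat_adjoint U *\<^sub>v v)"
    by (rule assoc_mult_mat_vec[OF UY adj_carrier[OF U] v])
  also have "\<dots> = U *\<^sub>v (Y *\<^sub>v (mat_adjoint U *\<^sub>v v))"
    by (rule assoc_mult_mat_vec[OF U Y w])
  finally have "(U * Y * mat_adjoint U) *\<^sub>v v = U *\<^sub>v (Y *\<^sub>v (mat_adjoint U *\<^sub>v v))" .
  then show ?thesis using adj_move[OF U v] w Y by simp
qed

lemma qf_mixture:
  fixes Y :: "complex mat"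
  assumes Y: "Y \<in> carrier_mat D D" and U: "\<forall>i<N. U i \<in> carrier_mat D D" and v: "v \<in> carrier_vec D"
  shows "conjugate v \<bullet> (mixture D N p U Y *\<^sub>v v) =
    (\<Sum>i<N. complex_of_real (p i) * (conjugate (mat_adjoint (U i) *\<^sub>v v) \<bullet> (Y *\<^sub>v (mat_adjoint (U i) *\<^sub>v v))))"
proof -
  define g where "g i r c = complex_of_real (p i) * (U i * Y * mat_adjoint (U i)) $$ (r,c)" for i r c
  have Mc: "mixture D N p U Y \<in> carrier_mat D D" unfolding mixture_def by (rule carrier_matI) simp_all
  have Mi: "U i * Y * mat_adjoint (U i) \<in> carrier_mat D D" if "i < N" for i
    using U that Y by (meson adj_carrier mult_carrier_mat)
  have "conjugate v \<bullet> (mixture D N p U Y *\<^sub>v v) = (\<Sum>r<D. cnj (v $ r) * (\<Sum>c<D. mixture D N p U Y $$ (r,c) * v $ c))"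
    by (rule qf_expand[OF Mc v])
  also have "\<dots> = (\<Sum>r<D. \<Sum>c<D. \<Sum>i<N. cnj (v $ r) * g i r c * v $ c)"
    unfolding mixture_def g_def by (simp add: sum_distrib_left sum_distrib_right mult.assoc)
  also have "\<dots> = (\<Sum>r<D. \<Sum>i<N. \<Sum>c<D. cnj (v $ r) * g i r c * v $ c)"
    by (rule sum.cong[OF refl], rule sum.swap)
  also have "\<dots> = (\<Sum>i<N. \<Sum>r<D. \<Sum>c<D. cnj (v $ r) * g i r c * v $ c)"
    by (rule sum.swap)
  also have "\<dots> = (\<Sum>i<N. complex_of_real (p i) * (conjugate v \<bullet> ((U i * Y * mat_adjoint (U i)) *\<^sub>v v)))"
  proof (rule sum.cong[OF refl])
    fix i assume "i \<in> {..<N}" then have i: "i < N" by simp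
    show "(\<Sum>r<D. \<Sum>c<D. cnj (v $ r) * g i r c * v $ c) = complex_of_real (p i) * (conjugate v \<bullet> ((U i * Y * mat_adjoint (U i)) *\<^sub>v v))"
      unfolding qf_expand[OF Mi[OF i] v] g_def by (simp add: sum_distrib_left mult_ac)
  qed
  also have "\<dots> = (\<Sum>i<N. complex_of_real (p i) * (conjugate (mat_adjoint (U i) *\<^sub>v v) \<bullet> (Y *\<^sub>v (mat_adjoint (U i) *\<^sub>v v))))"
    by (rule sum.cong[OF refl]) (use qf_conj U Y v in auto)
  finally show ?thesis .
qed

definition eb :: "nat \<Rightarrow> complex vec" where
  "eb t = vec_of_list [if t = 0 then 1 else 0, if t = 0 then 0 else 1]"

lemma eb_dim[simp]: "dim_vec (eb t) = 2"
  unfolding eb_def by (simp del: vec_of_list_Cons)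

fun bl :: "nat \<Rightarrow> nat \<Rightarrow> nat list" where
  "bl 0 x = []"
| "bl (Suc n) x = (x div 2^n) # bl n (x mod 2^n)"

lemma bl_length[simp]: "length (bl n x) = n"
  by (induction n arbitrary: x) auto

lemma eb_B: "eb t \<in> B_states"
proof (cases "t = 0")
  case True
  have "eb t = vec_of_list [complex_of_real (cos 0), complex_of_real (sin 0)]" using True by (simp add: eb_def)
  then show ?thesis unfolding B_states_def by force
next
  case False
  have "eb t = vec_of_list [complex_of_real (cos (pi/2)), complex_of_real (sin (pi/2))]" using False by (simp add: eb_def)
  moreover have "0 \<le> pi/2 \<and> pi/2 < 2*pi" using pi_gt_zero by linarith
  ultimately show ?thesis unfolding B_states_def by blast
qed

definition ev :: "nat \<Rightarrow> nat \<Rightarrow> complex vec" where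
  "ev D x = vec D (\<lambda>j. if j = x then 1 else 0)"

lemma tensor_bl: "x < 2^n \<Longrightarrow> tensor_list (map eb (bl n x)) = ev (2^n) x"
proof (induction n arbitrary: x)
  case 0 then show ?case by (auto simp: ev_def)
next
  case (Suc n)
  have xd: "x div 2^n < 2" using Suc.prems by (simp add: less_mult_imp_div_less)
  have xm: "x mod 2^n < 2^n" by simp
  have "tensor_list (map eb (bl (Suc n) x)) = kron_vec (eb (x div 2^n)) (ev (2^n) (x mod 2^n))"
    using Suc.IH[OF xm] by simp
  also have "\<dots> = ev (2^Suc n) x"
  proof (rule eq_vecI)
    fix j assume "j < dim_vec (ev (2^Suc n) x)"
    then have j: "j < 2 * 2^n" by (simp add: ev_def)
    have jd: "j div 2^n < 2" "j mod 2^n < 2^n" using j div_lt_mult mod_lt_mult by auto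
    have ebi: "eb t $ i = (if i = t then 1 else 0)" if "t < 2" "i < 2" for t i
      using less2_cases[OF that(1)] less2_cases[OF that(2)] by (auto simp: eb_def vec_of_list_index simp del: vec_of_list_Cons)
    have "(j div 2^n = x div 2^n \<and> j mod 2^n = x mod 2^n) = (j = x)"
      using div_mult_mod_eq[of j "2^n"] div_mult_mod_eq[of x "2^n"] by metis
    then show "kron_vec (eb (x div 2^n)) (ev (2^n) (x mod 2^n)) $ j = ev (2^Suc n) x $ j"
      using j jd ebi[OF xd jd(1)] by (auto simp: ev_def)
  qed (auto simp: ev_def eb_def)
  finally show ?case .
qed

lemma ev_B: "x < 2^n \<Longrightarrow> ev (2^n) x \<in> B_tensor n"
  unfolding B_tensor_def using tensor_bl[of x n, symmetric] eb_B by fastforce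


definition blk :: "nat \<Rightarrow> nat \<Rightarrow> complex vec \<Rightarrow> complex vec" where
  "blk k x w = vec k (\<lambda>j. w $ (x*k + j))"

lemma blk_carrier[simp]: "blk k x w \<in> carrier_vec k"
  unfolding blk_def by simp

lemma ev_dim[simp]: "dim_vec (ev D x) = D"
  unfolding ev_def by simp

lemma divmod_eq: "c2 < (k::nat) \<Longrightarrow> (c1*k + c2) div k = c1 \<and> (c1*k + c2) mod k = c2"
  by auto

lemma idx_lt: "c1 < d \<Longrightarrow> c2 < k \<Longrightarrow> c1*k + c2 < d*(k::nat)"
proof -
  assume c1: "c1 < d" and c2: "c2 < k"
  have "c1*k + c2 < c1*k + k" using c2 by simp
  also have "\<dots> = Suc c1 * k" by simp
  also have "\<dots> \<le> d*k" using mult_le_mono1[of "Suc c1" d k] c1 by simp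
  finally show ?thesis .
qed

lemma block_qf:
  fixes R :: "complex mat" and w :: "complex vec"
  assumes R: "R \<in> carrier_mat k k" and x: "x < d" and w: "w \<in> carrier_vec (d*k)"
  shows "conjugate w \<bullet> (kron_mat (proj (ev d x)) R *\<^sub>v w) = conjugate (blk k x w) \<bullet> (R *\<^sub>v blk k x w)"
proof -
  let ?K = "kron_mat (proj (ev d x)) R"
  have Kc: "?K \<in> carrier_mat (d*k) (d*k)" using R by (intro carrier_matI) (auto dest: carrier_matD)
  have dR: "dim_row R = k" "dim_col R = k" using R by auto
  have Ke: "?K $$ (r,c) = (if r div k = x \<and> c div k = x then R $$ (r mod k, c mod k) else 0)"
    if r: "r < d*k" and c: "c < d*k" for r c
  proof -
    have "r div k < d" "c div k < d" using r c div_lt_mult by auto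
    then show ?thesis using r c dR by (auto simp: ev_def)
  qed
  have inner: "(\<Sum>c<d*k. ?K $$ (r,c) * w $ c) = (if r div k = x then (\<Sum>c2<k. R $$ (r mod k, c2) * w $ (x*k + c2)) else 0)"
    if r: "r < d*k" for r
  proof -
    have "(\<Sum>c<d*k. ?K $$ (r,c) * w $ c) = (\<Sum>c1<d. \<Sum>c2<k. ?K $$ (r, c1*k+c2) * w $ (c1*k+c2))"
      by (rule sum_split_prod)
    also have "\<dots> = (\<Sum>c1<d. if c1 = x then (if r div k = x then (\<Sum>c2<k. R $$ (r mod k, c2) * w $ (x*k + c2)) else 0) else 0)"
    proof (rule sum.cong[OF refl])
      fix c1 assume "c1 \<in> {..<d}" then have c1: "c1 < d" by simp
      have "(\<Sum>c2<k. ?K $$ (r, c1*k+c2) * w $ (c1*k+c2)) = (\<Sum>c2<k. if c1 = x \<and> r div k = x then R $$ (r mod k, c2) * w $ (x*k + c2) else 0)"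
      proof (rule sum.cong[OF refl])
        fix c2 assume "c2 \<in> {..<k}" then have c2: "c2 < k" by simp
        have "c1*k + c2 < d*k" by (rule idx_lt[OF c1 c2])
        then show "?K $$ (r, c1*k+c2) * w $ (c1*k+c2) = (if c1 = x \<and> r div k = x then R $$ (r mod k, c2) * w $ (x*k + c2) else 0)"
          using Ke[OF r] divmod_eq[OF c2, of c1] by auto
      qed
      also have "\<dots> = (if c1 = x then (if r div k = x then (\<Sum>c2<k. R $$ (r mod k, c2) * w $ (x*k + c2)) else 0) else 0)"
        by auto
      finally show "(\<Sum>c2<k. ?K $$ (r, c1*k+c2) * w $ (c1*k+c2)) = (if c1 = x then (if r div k = x then (\<Sum>c2<k. R $$ (r mod k, c2) * w $ (x*k + c2)) else 0) else 0)" .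
    qed
    also have "\<dots> = (if r div k = x then (\<Sum>c2<k. R $$ (r mod k, c2) * w $ (x*k + c2)) else 0)"
      using x by (simp add: sum.delta)
    finally show ?thesis .
  qed
  have "conjugate w \<bullet> (?K *\<^sub>v w) = (\<Sum>r<d*k. cnj (w $ r) * (\<Sum>c<d*k. ?K $$ (r,c) * w $ c))"
    by (rule qf_expand[OF Kc w])
  also have "\<dots> = (\<Sum>r<d*k. cnj (w $ r) * (if r div k = x then (\<Sum>c2<k. R $$ (r mod k, c2) * w $ (x*k + c2)) else 0))"
    by (rule sum.cong[OF refl]) (use inner in auto)
  also have "\<dots> = (\<Sum>r1<d. \<Sum>r2<k. cnj (w $ (r1*k+r2)) * (if (r1*k+r2) div k = x then (\<Sum>c2<k. R $$ ((r1*k+r2) mod k, c2) * w $ (x*k + c2)) else 0))"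
    by (rule sum_split_prod)
  also have "\<dots> = (\<Sum>r1<d. if r1 = x then (\<Sum>r2<k. cnj (w $ (x*k+r2)) * (\<Sum>c2<k. R $$ (r2, c2) * w $ (x*k + c2))) else 0)"
  proof (rule sum.cong[OF refl])
    fix r1 assume "r1 \<in> {..<d}"
    show "(\<Sum>r2<k. cnj (w $ (r1*k+r2)) * (if (r1*k+r2) div k = x then (\<Sum>c2<k. R $$ ((r1*k+r2) mod k, c2) * w $ (x*k + c2)) else 0))
      = (if r1 = x then (\<Sum>r2<k. cnj (w $ (x*k+r2)) * (\<Sum>c2<k. R $$ (r2, c2) * w $ (x*k + c2))) else 0)"
      by (auto intro!: sum.cong simp: divmod_eq)
  qed
  also have "\<dots> = (\<Sum>r2<k. cnj (w $ (x*k+r2)) * (\<Sum>c2<k. R $$ (r2, c2) * w $ (x*k + c2)))"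
    using x by (simp add: sum.delta)
  also have "\<dots> = conjugate (blk k x w) \<bullet> (R *\<^sub>v blk k x w)"
    unfolding qf_expand[OF R blk_carrier] by (auto intro!: sum.cong simp: blk_def)
  finally show ?thesis .
qed

lemma ns_blk:
  "(\<Sum>x<d. ns k (blk k x w)) = ns (d*k) w"
  unfolding ns_def blk_def by (simp add: sum_split_prod)



lemma qf_zero:
  fixes R :: "complex mat" and u :: "complex vec"
  assumes R: "R \<in> carrier_mat k k" and u: "u \<in> carrier_vec k" and z: "ns k u = 0"
  shows "conjugate u \<bullet> (R *\<^sub>v u) = 0"
proof -
  have "\<forall>r\<in>{..<k}. (cmod (u $ r))^2 = 0"
    using z sum_nonneg_eq_0_iff[of "{..<k}" "\<lambda>r. (cmod (u $ r))^2"] unfolding ns_def by simp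
  then have "\<forall>r<k. u $ r = 0" by auto
  then show ?thesis unfolding qf_expand[OF R u] by simp
qed

lemma qf_bound:
  fixes R :: "complex mat" and u :: "complex vec"
  assumes R: "R \<in> carrier_mat k k" and u: "u \<in> carrier_vec k"
  shows "Re (conjugate u \<bullet> (R *\<^sub>v u)) \<le> (\<Sum>r<k. \<Sum>c<k. cmod (R $$ (r,c))) * ns k u"
proof -
  have sq: "(cmod (u $ r))^2 \<le> ns k u" if "r < k" for r
    unfolding ns_def by (rule member_le_sum) (use that in auto)
  have ab: "cmod (u $ r) * cmod (u $ c) \<le> ns k u" if "r < k" "c < k" for r c
  proof -
    have "cmod (u $ r) * cmod (u $ c) \<le> ((cmod (u $ r))^2 + (cmod (u $ c))^2) / 2"
    proof -
      have "0 \<le> (cmod (u $ r) - cmod (u $ c))^2" by simp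
      then show ?thesis by (simp add: power2_diff)
    qed
    also have "\<dots> \<le> ns k u" using sq[OF that(1)] sq[OF that(2)] by simp
    finally show ?thesis .
  qed
  have "Re (conjugate u \<bullet> (R *\<^sub>v u)) \<le> cmod (conjugate u \<bullet> (R *\<^sub>v u))" by (rule complex_Re_le_cmod)
  also have "\<dots> = cmod (\<Sum>r<k. \<Sum>c<k. cnj (u $ r) * R $$ (r,c) * u $ c)"
    unfolding qf_expand[OF R u] by (simp add: sum_distrib_left mult.assoc)
  also have "\<dots> \<le> (\<Sum>r<k. \<Sum>c<k. cmod (cnj (u $ r) * R $$ (r,c) * u $ c))"
    by (rule order_trans[OF norm_sum], rule sum_mono, rule norm_sum)
  also have "\<dots> \<le> (\<Sum>r<k. \<Sum>c<k. cmod (R $$ (r,c)) * ns k u)"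
  proof (rule sum_mono, rule sum_mono)
    fix r c assume "r \<in> {..<k}" "c \<in> {..<k}"
    then have rc: "r < k" "c < k" by auto
    have "cmod (cnj (u $ r) * R $$ (r,c) * u $ c) = cmod (R $$ (r,c)) * (cmod (u $ r) * cmod (u $ c))"
      by (simp add: norm_mult)
    also have "\<dots> \<le> cmod (R $$ (r,c)) * ns k u"
      by (rule mult_left_mono[OF ab[OF rc]]) simp
    finally show "cmod (cnj (u $ r) * R $$ (r,c) * u $ c) \<le> cmod (R $$ (r,c)) * ns k u" .
  qed
  also have "\<dots> = (\<Sum>r<k. \<Sum>c<k. cmod (R $$ (r,c))) * ns k u"
    by (simp add: sum_distrib_right)
  finally show ?thesis .
qed


lemma ev_ns: "j < k \<Longrightarrow> ns k (ev k j) = 1"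
proof -
  assume j: "j < k"
  have "(\<Sum>r<k. (cmod (ev k j $ r))^2) = (\<Sum>r<k. if r = j then 1 else 0)"
    by (rule sum.cong) (auto simp: ev_def)
  then show ?thesis unfolding ns_def using j by simp
qed

lemma ev_qf:
  fixes R :: "complex mat"
  assumes R: "R \<in> carrier_mat k k" and j: "j < k"
  shows "conjugate (ev k j) \<bullet> (R *\<^sub>v ev k j) = R $$ (j,j)"
proof -
  have evc: "ev k j \<in> carrier_vec k" unfolding ev_def by simp
  have "(\<Sum>r<k. cnj (ev k j $ r) * (\<Sum>c<k. R $$ (r,c) * ev k j $ c)) = (\<Sum>r<k. if r = j then R $$ (j,j) else 0)"
    by (rule sum.cong[OF refl]) (auto simp: ev_def if_distrib sum.delta' cong: if_cong)
  then show ?thesis unfolding qf_expand[OF R evc] using j by simp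
qed


lemma core:
  assumes rp: "randomization_procedure n (B_tensor n) m N p U \<rho>a \<rho>0" and i: "i < N"
  shows "p i \<le> 1/2^n"
proof -
  from rp have mn: "m \<ge> n" and p0: "\<forall>j<N. p j \<ge> 0" and ps: "(\<Sum>j<N. p j) = 1"
    and Uu: "\<forall>j<N. unitary_op m (U j)" and da: "density_mat (m-n) \<rho>a"
    and mixeq: "\<forall>\<phi>\<in>B_tensor n. mixture (2^m) N p U (kron_mat (proj \<phi>) \<rho>a) = \<rho>0"
    unfolding randomization_procedure_def by auto
  define d where "d = (2::nat)^n"
  define k where "k = (2::nat)^(m-n)"
  define D where "D = (2::nat)^m"
  have Ddk: "D = d*k" unfolding D_def d_def k_def using mn by (simp add: power_add[symmetric])
  have kpos: "k > 0" and dpos: "d > 0" unfolding k_def d_def by auto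
  have Uc: "U j \<in> carrier_mat D D" if "j < N" for j using Uu that unfolding unitary_op_def D_def by auto
  have Ul: "mat_adjoint (U j) * U j = 1\<^sub>m D" if "j < N" for j using Uu that unfolding unitary_op_def D_def by auto
  have Ur: "U j * mat_adjoint (U j) = 1\<^sub>m D" if "j < N" for j using unitary_right[OF Uc[OF that] Ul[OF that]] .
  have Ra: "\<rho>a \<in> carrier_mat k k" using da unfolding density_mat_def k_def by auto
  have Rform: "Re (conjugate u \<bullet> (\<rho>a *\<^sub>v u)) \<ge> 0" if "u \<in> carrier_vec k" for u
    using da that unfolding density_mat_def k_def by auto
  define X where "X x = kron_mat (proj (ev d x)) \<rho>a" for x
  have Xc: "X x \<in> carrier_mat D D" for x
    unfolding X_def Ddk using Ra by (intro carrier_matI) (auto dest: carrier_matD)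
  have Xmix: "mixture D N p U (X x) = \<rho>0" if "x < d" for x
    using mixeq ev_B[of x n] that unfolding X_def D_def d_def by auto
  define Rq where "Rq u = Re (conjugate u \<bullet> (\<rho>a *\<^sub>v u))" for u
  define Qv where "Qv v = Re (conjugate v \<bullet> (\<rho>0 *\<^sub>v v))" for v
  have Rq0: "Rq u \<ge> 0" if "u \<in> carrier_vec k" for u using Rform[OF that] unfolding Rq_def .
  have Qexp: "Qv v = (\<Sum>j<N. p j * Rq (blk k x (mat_adjoint (U j) *\<^sub>v v)))" if x: "x < d" and v: "v \<in> carrier_vec D" for x v
  proof -
    have "conjugate v \<bullet> (\<rho>0 *\<^sub>v v) = conjugate v \<bullet> (mixture D N p U (X x) *\<^sub>v v)" using Xmix[OF x] by simp
    also have "\<dots> = (\<Sum>j<N. complex_of_real (p j) * (conjugate (mat_adjoint (U j) *\<^sub>v v) \<bullet> (X x *\<^sub>v (mat_adjoint (U j) *\<^sub>v v))))"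
      by (rule qf_mixture[OF Xc _ v]) (use Uc in auto)
    also have "\<dots> = (\<Sum>j<N. complex_of_real (p j) * (conjugate (blk k x (mat_adjoint (U j) *\<^sub>v v)) \<bullet> (\<rho>a *\<^sub>v blk k x (mat_adjoint (U j) *\<^sub>v v))))"
    proof (rule sum.cong[OF refl])
      fix j assume "j \<in> {..<N}" then have j: "j < N" by simp
      have w: "mat_adjoint (U j) *\<^sub>v v \<in> carrier_vec (d*k)"
        using mult_mat_vec_carrier[OF adj_carrier[OF Uc[OF j]] v] Ddk by simp
      show "complex_of_real (p j) * (conjugate (mat_adjoint (U j) *\<^sub>v v) \<bullet> (X x *\<^sub>v (mat_adjoint (U j) *\<^sub>v v)))
        = complex_of_real (p j) * (conjugate (blk k x (mat_adjoint (U j) *\<^sub>v v)) \<bullet> (\<rho>a *\<^sub>v blk k x (mat_adjoint (U j) *\<^sub>v v)))"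
        unfolding X_def block_qf[OF Ra x w] ..
    qed
    finally show ?thesis unfolding Qv_def Rq_def by (simp add: Re_sum)
  qed
  define C where "C = (\<Sum>r<k. \<Sum>c<k. cmod (\<rho>a $$ (r,c)))"
  define S where "S = {Rq u / ns k u | u. u \<in> carrier_vec k \<and> ns k u \<noteq> 0}"
  define M where "M = Sup S"
  have bdd: "bdd_above S"
  proof (rule bdd_aboveI)
    fix s assume "s \<in> S"
    then obtain u where u: "u \<in> carrier_vec k" "ns k u \<noteq> 0" and s: "s = Rq u / ns k u" unfolding S_def by auto
    have "ns k u > 0" using u ns_nonneg[of k u] by linarith
    then show "s \<le> C" unfolding s using qf_bound[OF Ra u(1)] unfolding Rq_def C_def by (simp add: divide_le_eq)
  qed
  have ev0: "ev k 0 \<in> carrier_vec k" unfolding ev_def by simp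
  have Sne: "S \<noteq> {}" unfolding S_def using ev0 ev_ns[OF kpos] by auto
  have Mupper: "Rq u \<le> M * ns k u" if u: "u \<in> carrier_vec k" for u
  proof (cases "ns k u = 0")
    case True
    then show ?thesis using qf_zero[OF Ra u] unfolding Rq_def by simp
  next
    case False
    then have pos: "ns k u > 0" using ns_nonneg[of k u] by linarith
    have "Rq u / ns k u \<in> S" unfolding S_def using u False by auto
    then have "Rq u / ns k u \<le> M" unfolding M_def using bdd by (rule cSup_upper)
    then show ?thesis using pos by (simp add: divide_le_eq)
  qed
  have Mpos: "M > 0"
  proof -
    have "mat_trace \<rho>a = 1" using da unfolding density_mat_def by auto
    then have "(\<Sum>j<k. \<rho>a $$ (j,j)) = 1" unfolding mat_trace_def using Ra by auto
    then have "(\<Sum>j<k. Re (\<rho>a $$ (j,j))) = 1" by (metis Re_sum one_complex.simps(1))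
    then have "\<exists>j<k. Re (\<rho>a $$ (j,j)) > 0"
    proof (rule contrapos_pp)
      assume "\<not> (\<exists>j<k. Re (\<rho>a $$ (j,j)) > 0)"
      then have "\<forall>j<k. Re (\<rho>a $$ (j,j)) \<le> 0" by auto
      then have "(\<Sum>j<k. Re (\<rho>a $$ (j,j))) \<le> 0" by (intro sum_nonpos) auto
      then show "(\<Sum>j<k. Re (\<rho>a $$ (j,j))) \<noteq> 1" by simp
    qed
    then obtain j where j: "j < k" and pj: "Re (\<rho>a $$ (j,j)) > 0" by blast
    have evj: "ev k j \<in> carrier_vec k" unfolding ev_def by simp
    have "Rq (ev k j) / ns k (ev k j) = Re (\<rho>a $$ (j,j))"
      unfolding Rq_def ev_qf[OF Ra j] ev_ns[OF j] by simp
    moreover have "Rq (ev k j) / ns k (ev k j) \<in> S" unfolding S_def mem_Collect_eq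
      by (rule exI[of _ "ev k j"]) (simp add: evj ev_ns[OF j])
    ultimately have "Re (\<rho>a $$ (j,j)) \<le> M" unfolding M_def using bdd by (metis cSup_upper)
    then show ?thesis using pj by linarith
  qed
  have upper: "real d * Qv v \<le> M * ns D v" if v: "v \<in> carrier_vec D" for v
  proof -
    have "real d * Qv v = (\<Sum>x<d. Qv v)" by simp
    also have "\<dots> = (\<Sum>x<d. \<Sum>j<N. p j * Rq (blk k x (mat_adjoint (U j) *\<^sub>v v)))"
      by (rule sum.cong[OF refl]) (use Qexp v in auto)
    also have "\<dots> \<le> (\<Sum>x<d. \<Sum>j<N. p j * (M * ns k (blk k x (mat_adjoint (U j) *\<^sub>v v))))"
      by (intro sum_mono mult_left_mono Mupper blk_carrier) (use p0 in auto)
    also have "\<dots> = (\<Sum>j<N. p j * M * (\<Sum>x<d. ns k (blk k x (mat_adjoint (U j) *\<^sub>v v))))"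
      by (subst sum.swap) (simp add: sum_distrib_left mult.assoc)
    also have "\<dots> = (\<Sum>j<N. p j * M * ns D v)"
    proof (rule sum.cong[OF refl])
      fix j assume "j \<in> {..<N}" then have j: "j < N" by simp
      have "(\<Sum>x<d. ns k (blk k x (mat_adjoint (U j) *\<^sub>v v))) = ns D (mat_adjoint (U j) *\<^sub>v v)"
        unfolding Ddk by (rule ns_blk)
      also have "\<dots> = ns D v"
        by (rule ns_unitary[OF adj_carrier[OF Uc[OF j]] _ v]) (simp add: adj_adj Ur[OF j])
      finally show "p j * M * (\<Sum>x<d. ns k (blk k x (mat_adjoint (U j) *\<^sub>v v))) = p j * M * ns D v" by simp
    qed
    also have "\<dots> = M * ns D v" using ps by (simp add: sum_distrib_right[symmetric])
    finally show ?thesis .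
  qed
  have lower: "p i * Rq (blk k 0 w) \<le> Qv (U i *\<^sub>v w)" if w: "w \<in> carrier_vec D" for w
  proof -
    have Uw: "U i *\<^sub>v w \<in> carrier_vec D" using mult_mat_vec_carrier[OF Uc[OF i] w] .
    have bk: "mat_adjoint (U i) *\<^sub>v (U i *\<^sub>v w) = w"
      using assoc_mult_mat_vec[OF adj_carrier[OF Uc[OF i]] Uc[OF i] w, symmetric] Ul[OF i] w by simp
    have "p i * Rq (blk k 0 (mat_adjoint (U i) *\<^sub>v (U i *\<^sub>v w))) \<le> (\<Sum>j<N. p j * Rq (blk k 0 (mat_adjoint (U j) *\<^sub>v (U i *\<^sub>v w))))"
      by (rule member_le_sum[where f = "\<lambda>j. p j * Rq (blk k 0 (mat_adjoint (U j) *\<^sub>v (U i *\<^sub>v w)))"])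
        (use i p0 Rq0 in auto)
    also have "\<dots> = Qv (U i *\<^sub>v w)" using Qexp[OF _ Uw] dpos by simp
    finally show ?thesis unfolding bk .
  qed
  have key: "p i * Rq u \<le> M * ns k u / real d" if u: "u \<in> carrier_vec k" for u
  proof -
    define w where "w = vec D (\<lambda>r. if r < k then u $ r else 0)"
    have w: "w \<in> carrier_vec D" unfolding w_def by simp
    have kD: "k \<le> D" unfolding Ddk using dpos by simp
    have bw: "blk k 0 w = u"
      by (rule eq_vecI) (use u kD in \<open>auto simp: blk_def w_def\<close>)
    have nw: "ns D w = ns k u"
    proof -
      have "ns D w = (\<Sum>r<k. (cmod (w $ r))^2)"
        unfolding ns_def by (rule sum.mono_neutral_right) (use kD in \<open>auto simp: w_def\<close>)
      also have "\<dots> = ns k u" unfolding ns_def by (rule sum.cong) (use kD in \<open>auto simp: w_def\<close>)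
      finally show ?thesis .
    qed
    have "p i * Rq u \<le> Qv (U i *\<^sub>v w)" using lower[OF w] bw by simp
    also have "\<dots> \<le> M * ns D (U i *\<^sub>v w) / real d"
      using upper[OF mult_mat_vec_carrier[OF Uc[OF i] w]] dpos by (simp add: le_divide_eq mult.commute)
    also have "ns D (U i *\<^sub>v w) = ns D w" by (rule ns_unitary[OF Uc[OF i] Ul[OF i] w])
    finally show ?thesis unfolding nw .
  qed
  show ?thesis
  proof (cases "p i = 0")
    case True then show ?thesis by simp
  next
    case False
    then have pi: "p i > 0" using p0 i by (simp add: order_less_le)
    have "M \<le> M / (real d * p i)"
      unfolding M_def[of] 
    proof (rule cSup_least[OF Sne])
      fix s assume "s \<in> S"
      then obtain u where u: "u \<in> carrier_vec k" "ns k u \<noteq> 0" and s: "s = Rq u / ns k u" unfolding S_def by auto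
      have nspos: "ns k u > 0" using u ns_nonneg[of k u] by linarith
      have "p i * Rq u \<le> M * ns k u / real d" by (rule key[OF u(1)])
      then have "Rq u \<le> M * ns k u / (real d * p i)" using pi dpos by (simp add: field_simps)
      then show "s \<le> Sup S / (real d * p i)" unfolding s M_def using nspos by (simp add: field_simps)
    qed
    then have "real d * p i \<le> 1" using Mpos pi dpos by (simp add: le_divide_eq)
    then show ?thesis unfolding d_def using dpos by (simp add: field_simps)
  qed
qed




lemma shannon_bound:
  assumes p: "\<forall>i<N. 0 \<le> p i \<and> p i \<le> 1/2^n" and ps: "(\<Sum>i<N. p i) = 1"
  shows "shannon N p \<ge> real n"
proof -
  have tm: "p i * real n \<le> - (if p i = 0 then 0 else p i * log 2 (p i))" if i: "i < N" for i
  proof (cases "p i = 0")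
    case True then show ?thesis by simp
  next
    case False
    then have pi: "p i > 0" using p i by (simp add: order_less_le)
    have "log 2 (p i) \<le> log 2 (1/2^n)" using p i pi by (simp add: log_le_cancel_iff del: log_divide)
    also have "log 2 (1/2^n) = - real n" by (simp add: log_divide)
    finally have "log 2 (p i) \<le> - real n" .
    then have "p i * log 2 (p i) \<le> p i * (- real n)" using pi by (intro mult_left_mono) auto
    then show ?thesis using False by simp
  qed
  have "real n = (\<Sum>i<N. p i * real n)" using ps by (simp add: sum_distrib_right[symmetric])
  also have "\<dots> \<le> (\<Sum>i<N. - (if p i = 0 then 0 else p i * log 2 (p i)))"
    by (rule sum_mono) (use tm in auto)
  also have "\<dots> = shannon N p" unfolding shannon_def by (simp add: sum_negf)
  finally show ?thesis .
qed



theorem corollary11: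
  fixes n :: nat
  assumes "n \<ge> 1"
  shows "(\<exists>m N p U \<rho>a \<rho>0. randomization_procedure n (B_tensor n) m N p U \<rho>a \<rho>0
             \<and> shannon N p = real n)
       \<and> (\<forall>m N p U \<rho>a \<rho>0. randomization_procedure n (B_tensor n) m N p U \<rho>a \<rho>0
             \<longrightarrow> shannon N p \<ge> real n)"
proof
  show "\<exists>m N p U \<rho>a \<rho>0. randomization_procedure n (B_tensor n) m N p U \<rho>a \<rho>0 \<and> shannon N p = real n"
    using part1[of n] by blast
  show "\<forall>m N p U \<rho>a \<rho>0. randomization_procedure n (B_tensor n) m N p U \<rho>a \<rho>0 \<longrightarrow> shannon N p \<ge> real n"
  proof (intro allI impI)
    fix m N p U \<rho>a \<rho>0
    assume rp: "randomization_procedure n (B_tensor n) m N p U \<rho>a \<rho>0"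
    have "\<forall>i<N. 0 \<le> p i \<and> p i \<le> 1/2^n" using core[OF rp] rp unfolding randomization_procedure_def by auto
    moreover have "(\<Sum>i<N. p i) = 1" using rp unfolding randomization_procedure_def by auto
    ultimately show "shannon N p \<ge> real n" by (rule shannon_bound)
  qed
qed

end
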